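(* Let $G$ be a trigraph containing a fence gadget $F$ (with sides $A$, $B$) attached to a set $S$. In any partial contraction sequence from $G$, if the first contraction that involves two vertices of $V(F)$ involves a pair $(a_i,b_j)$ with $a_i\in A$, $b_j\in B$, then the vertex created by it has at least $3$ red neighbours whose parts intersect $V(F)$.
   Context: A trigraph $G$ consists of a vertex set $V(G)$ and two disjoint sets of unordered pairs of distinct vertices: black edges and red edges. Contracting two distinct vertices $u,v$ replaces them by a new vertex $w$ such that, for every other vertex $z$, $wz$ is black if $uz,vz$ are both black, a non-edge if both are non-edges, and red otherwise. In a partial contraction sequence from $G$, each vertex $u$ of a later trigraph corresponds to the set $u(G)$ (its part) of vertices of $G$ merged into it; a contraction of $u,u'$ involves a vertex $v$ of $G$ if $v\in u(G)\cup u'(G)$, and involves a pair $v,v'$ if $v\in u(G),v'\in u'(G)$ or vice versa. A fence gadget is a trigraph $F$ on $A\cup B$, $A=\{a_1,\dots,a_6\}$, $B=\{b_1,\dots,b_6\}$, whose black edges are those of the cycles $a_1a_2a_3a_4a_5a_6a_1$ and $b_1b_2b_3b_4b_5b_6b_1$ together with $b_1a_6$, and whose red edges are $a_ib_i$ for $i\in[6]$ and $a_ib_{i+1}$ for $i\in[5]$. Inside a trigraph $G$, a fence gadget $F$ is attached to a nonempty set $S\subseteq V(G)\setminus V(F)$ if every vertex of $A$ is joined by a black edge to every vertex of $S$ and no vertex of $B$ is adjacent to a vertex of $S$. *)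

theory Defs
  imports Main
begin

text \<open>A trigraph over vertex type 'v: (vertex set, black edges, red edges);
edges are unordered pairs represented as two-element sets.\<close>
type_synonym 'v trigraph = "'v set \<times> 'v set set \<times> 'v set set"

definition tverts :: "'v trigraph \<Rightarrow> 'v set" where "tverts T = fst T"
definition tblack :: "'v trigraph \<Rightarrow> 'v set set" where "tblack T = fst (snd T)"
definition tred :: "'v trigraph \<Rightarrow> 'v set set" where "tred T = snd (snd T)"

definition is_trigraph :: "'v trigraph \<Rightarrow> bool" where
  "is_trigraph T \<longleftrightarrow> finite (tverts T) \<and> tblack T \<inter> tred T = {} \<and>
     (\<forall>e \<in> tblack T \<union> tred T. \<exists>x y. x \<noteq> y \<and> x \<in> tverts T \<and> y \<in> tverts T \<and> e = {x, y})"

text \<open>In a partial contraction sequence, every vertex is named by its part,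
i.e. the set of vertices of the original trigraph merged into it.\<close>
definition lift :: "'v trigraph \<Rightarrow> 'v set trigraph" where
  "lift T = ((\<lambda>x. {x}) ` tverts T, (\<lambda>e. (\<lambda>x. {x}) ` e) ` tblack T,
             (\<lambda>e. (\<lambda>x. {x}) ` e) ` tred T)"

definition contract :: "'v set trigraph \<Rightarrow> 'v set \<Rightarrow> 'v set \<Rightarrow> 'v set trigraph" where
  "contract T u v =
    (let w = u \<union> v; Z = tverts T - {u, v} in
     (insert w Z,
      {e \<in> tblack T. u \<notin> e \<and> v \<notin> e} \<union>
        {{w, z} | z. z \<in> Z \<and> {u, z} \<in> tblack T \<and> {v, z} \<in> tblack T},
      {e \<in> tred T. u \<notin> e \<and> v \<notin> e} \<union>
        {{w, z} | z. z \<in> Z \<and> ({u, z} \<in> tblack T \<union> tred T \<or> {v, z} \<in> tblack T \<union> tred T)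
                  \<and> \<not> ({u, z} \<in> tblack T \<and> {v, z} \<in> tblack T)}))"

definition apply_seq :: "'v set trigraph \<Rightarrow> ('v set \<times> 'v set) list \<Rightarrow> 'v set trigraph" where
  "apply_seq T ps = foldl (\<lambda>T' p. contract T' (fst p) (snd p)) T ps"

definition partial_contraction_seq :: "'v trigraph \<Rightarrow> ('v set \<times> 'v set) list \<Rightarrow> bool" where
  "partial_contraction_seq G ps \<longleftrightarrow>
     (\<forall>k < length ps. let T = apply_seq (lift G) (take k ps) in
        fst (ps ! k) \<in> tverts T \<and> snd (ps ! k) \<in> tverts T \<and> fst (ps ! k) \<noteq> snd (ps ! k))"

text \<open>Fence gadget with A = a ` {1..6}, B = b ` {1..6}.\<close>
definition fence_black :: "(nat \<Rightarrow> 'v) \<Rightarrow> (nat \<Rightarrow> 'v) \<Rightarrow> 'v set set" where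
  "fence_black a b =
     {{a i, a (i mod 6 + 1)} | i. i \<in> {1..6}} \<union> {{b i, b (i mod 6 + 1)} | i. i \<in> {1..6}}
     \<union> {{b 1, a 6}}"

definition fence_red :: "(nat \<Rightarrow> 'v) \<Rightarrow> (nat \<Rightarrow> 'v) \<Rightarrow> 'v set set" where
  "fence_red a b = {{a i, b i} | i. i \<in> {1..6}} \<union> {{a i, b (i + 1)} | i. i \<in> {1..5}}"

definition fence_verts :: "(nat \<Rightarrow> 'v) \<Rightarrow> (nat \<Rightarrow> 'v) \<Rightarrow> 'v set" where
  "fence_verts a b = a ` {1..6} \<union> b ` {1..6}"

definition contains_fence :: "'v trigraph \<Rightarrow> (nat \<Rightarrow> 'v) \<Rightarrow> (nat \<Rightarrow> 'v) \<Rightarrow> bool" where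
  "contains_fence G a b \<longleftrightarrow>
     inj_on a {1..6} \<and> inj_on b {1..6} \<and> a ` {1..6} \<inter> b ` {1..6} = {} \<and>
     fence_verts a b \<subseteq> tverts G \<and>
     (\<forall>x \<in> fence_verts a b. \<forall>y \<in> fence_verts a b. x \<noteq> y \<longrightarrow>
        ({x, y} \<in> tblack G \<longleftrightarrow> {x, y} \<in> fence_black a b) \<and>
        ({x, y} \<in> tred G \<longleftrightarrow> {x, y} \<in> fence_red a b))"

definition fence_attached :: "'v trigraph \<Rightarrow> (nat \<Rightarrow> 'v) \<Rightarrow> (nat \<Rightarrow> 'v) \<Rightarrow> 'v set \<Rightarrow> bool" where
  "fence_attached G a b S \<longleftrightarrow>
     S \<noteq> {} \<and> S \<subseteq> tverts G - fence_verts a b \<and>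
     (\<forall>i \<in> {1..6}. \<forall>s \<in> S. {a i, s} \<in> tblack G \<and> {b i, s} \<notin> tblack G \<union> tred G)"

definition involves_pair :: "'v set \<Rightarrow> 'v set \<Rightarrow> 'v \<Rightarrow> 'v \<Rightarrow> bool" where
  "involves_pair u u' x y \<longleftrightarrow> (x \<in> u \<and> y \<in> u') \<or> (x \<in> u' \<and> y \<in> u)"

definition involves_two :: "'v set \<Rightarrow> 'v set \<Rightarrow> 'v set \<Rightarrow> bool" where
  "involves_two u u' X \<longleftrightarrow> (\<exists>x \<in> X. \<exists>y \<in> X. x \<noteq> y \<and> x \<in> u \<union> u' \<and> y \<in> u \<union> u')"

end

theory Submission
  imports Defs
begin

lemma contract_simps:
 "tverts (contract T u v) = insert (u\<union>v) (tverts T - {u,v})"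
 "tblack (contract T u v) = {e \<in> tblack T. u\<notin>e \<and> v\<notin>e} \<union> {{u\<union>v, z}|z. z \<in> tverts T - {u,v} \<and> {u,z} \<in> tblack T \<and> {v,z} \<in> tblack T}"
 "tred (contract T u v) = {e \<in> tred T. u \<notin> e \<and> v \<notin> e} \<union>
        {{u\<union>v, z} | z. z \<in> tverts T - {u,v} \<and> ({u, z} \<in> tblack T \<union> tred T \<or> {v, z} \<in> tblack T \<union> tred T)
                  \<and> \<not> ({u, z} \<in> tblack T \<and> {v, z} \<in> tblack T)}"
  by (simp_all add: contract_def Let_def tverts_def tblack_def tred_def)

definition INV1 :: "'v trigraph \<Rightarrow> 'v set trigraph \<Rightarrow> bool" where
 "INV1 G T \<longleftrightarrow> (\<forall>p q. {p,q} \<in> tblack T \<longrightarrow> p \<noteq> q \<longrightarrow> (\<forall>x\<in>p. \<forall>y\<in>q. {x,y} \<in> tblack G))"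
definition INV2 :: "'v trigraph \<Rightarrow> 'v set trigraph \<Rightarrow> bool" where
 "INV2 G T \<longleftrightarrow> (\<forall>p\<in>tverts T. \<forall>q\<in>tverts T. p \<noteq> q \<longrightarrow> (\<forall>x\<in>p. \<forall>y\<in>q. {x,y} \<in> tblack G \<union> tred G \<longrightarrow> {p,q} \<in> tblack T \<union> tred T))"
definition INV3 :: "'v trigraph \<Rightarrow> 'v set trigraph \<Rightarrow> bool" where
 "INV3 G T \<longleftrightarrow> (\<forall>x\<in>tverts G. \<exists>p\<in>tverts T. x \<in> p)"
definition INV :: "'v trigraph \<Rightarrow> 'v set trigraph \<Rightarrow> bool" where
 "INV G T \<longleftrightarrow> finite (tverts T) \<and> INV1 G T \<and> INV2 G T \<and> INV3 G T"

lemma INV_lift: "finite (tverts G) \<Longrightarrow> INV G (lift G)"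
proof -
  assume f: "finite (tverts G)"
  have l: "tverts (lift G) = (\<lambda>x. {x}) ` tverts G" "tblack (lift G) = (\<lambda>e. (\<lambda>x. {x}) ` e) ` tblack G"
    "tred (lift G) = (\<lambda>e. (\<lambda>x. {x}) ` e) ` tred G"
    by (simp_all add: lift_def tverts_def tblack_def tred_def)
  have 1: "{x,y} \<in> tblack G" if H: "{p,q} \<in> tblack (lift G)" "p \<noteq> q" "x \<in> p" "y \<in> q" for p q x y
  proof -
    obtain e where e: "e \<in> tblack G" "{p,q} = (\<lambda>x. {x}) ` e" using H(1) unfolding l by (elim imageE) auto
    have "e = \<Union>((\<lambda>x. {x}) ` e)" by auto
    also have "\<dots> = p \<union> q" using e(2) by (metis Union_insert Union_empty Un_empty_right)
    finally have ep: "e = p \<union> q" .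
    have "p \<in> (\<lambda>x. {x}) ` e" "q \<in> (\<lambda>x. {x}) ` e" using e(2) by auto
    then have "p = {x}" "q = {y}" using H by auto
    then show ?thesis using ep e by (simp add: insert_commute)
  qed
  have 2: "{p,q} \<in> tblack (lift G) \<union> tred (lift G)" if "p \<in> tverts (lift G)" "q \<in> tverts (lift G)"
     "x \<in> p" "y \<in> q" "{x,y} \<in> tblack G \<union> tred G" for p q x y
  proof -
    have "p = {x}" "q = {y}" using that l by auto
    then have "{p,q} = (\<lambda>x. {x}) ` {x,y}" by simp
    then have A: "{p,q} = (\<lambda>e. (\<lambda>x. {x}) ` e) {x,y}" by simp
    show ?thesis
    proof (cases "{x,y} \<in> tblack G")
      case True
      have "{p,q} \<in> (\<lambda>e. (\<lambda>x. {x}) ` e) ` tblack G" by (rule image_eqI[where f="\<lambda>e. (\<lambda>x. {x}) ` e", OF A True])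
      then show ?thesis unfolding l by blast
    next
      case False
      then have "{x,y} \<in> tred G" using that(5) by blast
      have "{p,q} \<in> (\<lambda>e. (\<lambda>x. {x}) ` e) ` tred G" by (rule image_eqI[where f="\<lambda>e. (\<lambda>x. {x}) ` e", OF A \<open>{x,y} \<in> tred G\<close>])
      then show ?thesis unfolding l by blast
    qed
  qed
  show ?thesis unfolding INV_def INV1_def INV2_def INV3_def
  proof (intro conjI allI ballI impI)
    show "finite (tverts (lift G))" using f l by simp
  next
    fix x assume "x \<in> tverts G" then show "\<exists>p\<in>tverts (lift G). x \<in> p" using l by auto
  qed (use 1 2 in blast)+
qed

lemma INV_contract: assumes "INV G T" "u \<in> tverts T" "v \<in> tverts T" shows "INV G (contract T u v)"
proof -
  let ?w = "u \<union> v" and ?Z = "tverts T - {u,v}"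
  have fin: "finite (tverts (contract T u v))" using assms by (simp add: INV_def contract_simps)
  have J1: "{x,y} \<in> tblack G" if "{p,q} \<in> tblack T" "p \<noteq> q" "x\<in>p" "y\<in>q" for p q x y
  proof -
    have "INV1 G T" using assms(1) by (simp add: INV_def)
    then show ?thesis unfolding INV1_def using that by blast
  qed
  have J2: "{p,q} \<in> tblack T \<union> tred T" if "p \<in> tverts T" "q \<in> tverts T" "p \<noteq> q" "x\<in>p" "y\<in>q"
      "{x,y} \<in> tblack G \<union> tred G" for p q x y
  proof -
    have "INV2 G T" using assms(1) by (simp add: INV_def)
    then show ?thesis unfolding INV2_def using that by blast
  qed
  have 1: "{x,y} \<in> tblack G" if H: "{p,q} \<in> tblack (contract T u v)" "p \<noteq> q" "x \<in> p" "y \<in> q" for p q x y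
  proof -
    consider "{p,q} \<in> tblack T" | z where "{p,q} = {?w,z}" "z \<in> ?Z" "{u,z} \<in> tblack T" "{v,z} \<in> tblack T"
      using H(1) unfolding contract_simps by blast
    then show ?thesis
    proof cases
      case 1 then show ?thesis using J1 H by blast
    next
      case 2
      have X: "{x',y'} \<in> tblack G" if "x' \<in> ?w" "y' \<in> z" for x' y'
      proof (cases "x' \<in> u")
        case True then show ?thesis using J1[OF 2(3)] 2(2) that by blast
      next
        case False then show ?thesis using J1[OF 2(4)] 2(2) that by blast
      qed
      have "(p = ?w \<and> q = z) \<or> (p = z \<and> q = ?w)" using 2(1) H(2) by (auto simp: doubleton_eq_iff)
      then show ?thesis
      proof
        assume "p = ?w \<and> q = z" then show ?thesis using X H(3,4) by blast
      next
        assume "p = z \<and> q = ?w" then have "{y,x} \<in> tblack G" using X H(3,4) by blast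
        then show ?thesis by (simp add: insert_commute)
      qed
    qed
  qed
  have key: "{?w,z} \<in> tblack (contract T u v) \<union> tred (contract T u v)"
    if K: "z \<in> ?Z" "x \<in> ?w" "y \<in> z" "{x,y} \<in> tblack G \<union> tred G" for z x y
  proof -
    have "{u,z} \<in> tblack T \<union> tred T \<or> {v,z} \<in> tblack T \<union> tred T"
    proof (cases "x \<in> u")
      case True
      have "{u,z} \<in> tblack T \<union> tred T" by (rule J2[OF assms(2) _ _ True K(3,4)]) (use K(1) in auto)
      then show ?thesis by blast
    next
      case False
      then have "x \<in> v" using K(2) by blast
      have "{v,z} \<in> tblack T \<union> tred T" by (rule J2[OF assms(3) _ _ \<open>x \<in> v\<close> K(3,4)]) (use K(1) in auto)
      then show ?thesis by blast
    qed
    then show ?thesis using K(1) unfolding contract_simps by blast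
  qed
  have 2: "{p,q} \<in> tblack (contract T u v) \<union> tred (contract T u v)"
    if H: "p \<in> tverts (contract T u v)" "q \<in> tverts (contract T u v)" "p \<noteq> q" "x\<in>p" "y\<in>q"
      "{x,y} \<in> tblack G \<union> tred G" for p q x y
  proof -
    consider "p = ?w" "q \<in> ?Z" | "q = ?w" "p \<in> ?Z" | "p \<in> ?Z" "q \<in> ?Z" "p \<noteq> ?w" "q \<noteq> ?w"
      using H(1,2,3) unfolding contract_simps by blast
    then show ?thesis
    proof cases
      case 1 then show ?thesis using key[of q x y] H by blast
    next
      case 2
      have "{y,x} \<in> tblack G \<union> tred G" using H(6) by (simp add: insert_commute)
      then have "{?w,p} \<in> tblack (contract T u v) \<union> tred (contract T u v)" using key[of p y x] H 2 by blast
      then show ?thesis using 2 by (simp add: insert_commute)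
    next
      case 3
      have "{p,q} \<in> tblack T \<union> tred T" using J2[of p q x y] 3 H by blast
      moreover have "u \<notin> {p,q}" "v \<notin> {p,q}" using 3 by auto
      ultimately show ?thesis unfolding contract_simps by blast
    qed
  qed
  have 3: "\<exists>p\<in>tverts (contract T u v). x \<in> p" if X: "x \<in> tverts G" for x
  proof -
    have "INV3 G T" using assms(1) by (simp add: INV_def)
    then obtain p where p: "p \<in> tverts T" "x \<in> p" unfolding INV3_def using X by blast
    show ?thesis
    proof (cases "p \<in> {u,v}")
      case True
      then have "x \<in> ?w" using p by blast
      moreover have "?w \<in> tverts (contract T u v)" unfolding contract_simps by (rule insertI1)
      ultimately show ?thesis by blast
    next
      case False
      then have "p \<in> tverts (contract T u v)" using p unfolding contract_simps by blast
      then show ?thesis using p by blast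
    qed
  qed
  have "INV1 G (contract T u v)" unfolding INV1_def using 1 by blast
  moreover have "INV2 G (contract T u v)" unfolding INV2_def using 2 by blast
  moreover have "INV3 G (contract T u v)" unfolding INV3_def using 3 by blast
  ultimately show ?thesis unfolding INV_def using fin by blast
qed


lemma INV_J1: "INV G T \<Longrightarrow> {p,q} \<in> tblack T \<Longrightarrow> p \<noteq> q \<Longrightarrow> x\<in>p \<Longrightarrow> y\<in>q \<Longrightarrow> {x,y} \<in> tblack G"
  unfolding INV_def INV1_def by blast

lemma INV_J2: "INV G T \<Longrightarrow> p \<in> tverts T \<Longrightarrow> q \<in> tverts T \<Longrightarrow> p \<noteq> q \<Longrightarrow> x\<in>p \<Longrightarrow> y\<in>q \<Longrightarrow>
      {x,y} \<in> tblack G \<union> tred G \<Longrightarrow> {p,q} \<in> tblack T \<union> tred T"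
  unfolding INV_def INV2_def by blast

lemma red_created:
  assumes I: "INV G T" and uv: "u \<in> tverts T" "v \<in> tverts T" and z: "z \<in> tverts T" "z \<noteq> u" "z \<noteq> v"
    and c: "c \<in> u \<union> v" and d: "d \<in> u \<union> v" and x: "x \<in> z"
    and e: "{c,x} \<in> tblack G \<union> tred G \<or> {d,x} \<in> tblack G \<union> tred G"
    and nb: "{c,x} \<notin> tblack G \<or> {d,x} \<notin> tblack G"
  shows "{u \<union> v, z} \<in> tred (contract T u v)"
proof -
  have E: "{u,z} \<in> tblack T \<union> tred T \<or> {v,z} \<in> tblack T \<union> tred T"
    if "y \<in> u \<union> v" "{y,x} \<in> tblack G \<union> tred G" for y
  proof (cases "y \<in> u")
    case True
    have "{u,z} \<in> tblack T \<union> tred T" using INV_J2[OF I uv(1) z(1) _ True x that(2)] z(2) by metis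
    then show ?thesis by blast
  next
    case False
    then have "y \<in> v" using that(1) by blast
    have "{v,z} \<in> tblack T \<union> tred T" using INV_J2[OF I uv(2) z(1) _ \<open>y \<in> v\<close> x that(2)] z(3) by metis
    then show ?thesis by blast
  qed
  have e2: "{u,z} \<in> tblack T \<union> tred T \<or> {v,z} \<in> tblack T \<union> tred T"
    using e E c d by blast
  have B: "{y,x} \<in> tblack G" if "y \<in> u \<union> v" "{u,z} \<in> tblack T" "{v,z} \<in> tblack T" for y
  proof (cases "y \<in> u")
    case True
    show ?thesis using INV_J1[OF I that(2) _ True x] z(2) by metis
  next
    case False
    then have "y \<in> v" using that(1) by blast
    show ?thesis using INV_J1[OF I that(3) _ \<open>y \<in> v\<close> x] z(3) by metis
  qed
  have nb2: "\<not> ({u,z} \<in> tblack T \<and> {v,z} \<in> tblack T)"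
    using nb B c d by blast
  have zZ: "z \<in> tverts T - {u,v}" using z by blast
  show ?thesis unfolding contract_simps using e2 nb2 zZ by blast
qed

lemma apply_seq_Suc: "m < length ps \<Longrightarrow> apply_seq T (take (Suc m) ps) = contract (apply_seq T (take m ps)) (fst (ps!m)) (snd (ps!m))"
  by (simp add: apply_seq_def take_Suc_conv_app_nth)

lemma INV_seq:
  assumes "finite (tverts G)" "partial_contraction_seq G ps" "m \<le> length ps"
  shows "INV G (apply_seq (lift G) (take m ps))"
  using assms(3)
proof (induction m)
  case 0
  then show ?case using INV_lift[OF assms(1)] by (simp add: apply_seq_def)
next
  case (Suc m)
  then have m: "m < length ps" by simp
  have v: "fst (ps ! m) \<in> tverts (apply_seq (lift G) (take m ps))" "snd (ps ! m) \<in> tverts (apply_seq (lift G) (take m ps))"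
    using assms(2) m unfolding partial_contraction_seq_def Let_def by blast+
  show ?case unfolding apply_seq_Suc[OF m] by (rule INV_contract[OF Suc.IH v]) (use m in simp)
qed

definition KP :: "'v set \<Rightarrow> 'v set trigraph \<Rightarrow> bool" where
  "KP F T \<longleftrightarrow> (\<forall>p\<in>tverts T. \<forall>x\<in>F. \<forall>y\<in>F. x \<in> p \<longrightarrow> y \<in> p \<longrightarrow> x = y)"

lemma KP_seq:
  assumes "\<forall>k' < k. \<not> involves_two (fst (ps ! k')) (snd (ps ! k')) F" "k < length ps" "m \<le> k"
  shows "KP F (apply_seq (lift G) (take m ps))"
  using assms(3)
proof (induction m)
  case 0
  have "tverts (lift G) = (\<lambda>x. {x}) ` tverts G" by (simp add: lift_def tverts_def)
  then show ?case by (auto simp: apply_seq_def KP_def)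
next
  case (Suc m)
  then have m: "m < length ps" "m < k" using assms(2) by simp_all
  have IH: "KP F (apply_seq (lift G) (take m ps))" using Suc by simp
  have ni: "\<not> involves_two (fst (ps ! m)) (snd (ps ! m)) F" using assms(1) m(2) by blast
  show ?case unfolding apply_seq_Suc[OF m(1)] KP_def contract_simps
  proof (intro ballI impI)
    fix p x y assume p: "p \<in> insert (fst (ps ! m) \<union> snd (ps ! m)) (tverts (apply_seq (lift G) (take m ps)) - {fst (ps ! m), snd (ps ! m)})"
      and xy: "x \<in> F" "y \<in> F" "x \<in> p" "y \<in> p"
    show "x = y"
    proof (cases "p = fst (ps ! m) \<union> snd (ps ! m)")
      case True
      then show ?thesis using ni xy unfolding involves_two_def by blast
    next
      case False
      then have "p \<in> tverts (apply_seq (lift G) (take m ps))" using p by blast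
      then show ?thesis using IH xy unfolding KP_def by blast
    qed
  qed
qed


definition vx :: "(nat \<Rightarrow> 'v) \<Rightarrow> (nat \<Rightarrow> 'v) \<Rightarrow> bool \<times> nat \<Rightarrow> 'v" where
  "vx a b w = (if fst w then a (snd w) else b (snd w))"

lemma vx_eq:
  assumes "contains_fence G a b" "snd w \<in> {1..6}" "snd w' \<in> {1..6}"
  shows "vx a b w = vx a b w' \<longleftrightarrow> w = w'"
proof -
  have ia: "inj_on a {1..6}" and ib: "inj_on b {1..6}" and dj: "a ` {1..6} \<inter> b ` {1..6} = {}"
    using assms(1) unfolding contains_fence_def by simp_all
  obtain s p t q where w: "w = (s,p)" "w' = (t,q)" by (cases w, cases w') auto
  have p: "p \<in> {1..6}" and q: "q \<in> {1..6}" using assms(2,3) w by auto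
  have ab: "a p \<noteq> b q" "b p \<noteq> a q" using dj p q by blast+
  show ?thesis
  proof (cases s; cases t)
    assume "s" "t" then show ?thesis using w inj_on_eq_iff[OF ia p q] by (simp add: vx_def)
  next
    assume "s" "\<not> t" then show ?thesis using w ab by (simp add: vx_def)
  next
    assume "\<not> s" "t" then show ?thesis using w ab by (simp add: vx_def)
  next
    assume "\<not> s" "\<not> t" then show ?thesis using w inj_on_eq_iff[OF ib p q] by (simp add: vx_def)
  qed
qed

lemma vx_doubleton:
  assumes "contains_fence G a b" "snd w1 \<in> {1..6}" "snd w2 \<in> {1..6}" "snd w3 \<in> {1..6}" "snd w4 \<in> {1..6}"
  shows "{vx a b w1, vx a b w2} = {vx a b w3, vx a b w4} \<longleftrightarrow> (w1 = w3 \<and> w2 = w4) \<or> (w1 = w4 \<and> w2 = w3)"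
proof -
  have "vx a b w1 = vx a b w3 \<longleftrightarrow> w1 = w3" "vx a b w2 = vx a b w4 \<longleftrightarrow> w2 = w4"
       "vx a b w1 = vx a b w4 \<longleftrightarrow> w1 = w4" "vx a b w2 = vx a b w3 \<longleftrightarrow> w2 = w3"
    using vx_eq[OF assms(1) assms(2) assms(4)] vx_eq[OF assms(1) assms(3) assms(5)]
      vx_eq[OF assms(1) assms(2) assms(5)] vx_eq[OF assms(1) assms(3) assms(4)] by simp_all
  then show ?thesis by (simp add: doubleton_eq_iff)
qed

definition BLK :: "bool \<times> nat \<Rightarrow> bool \<times> nat \<Rightarrow> bool" where
  "BLK w1 w2 \<longleftrightarrow> (fst w1 = fst w2 \<and> (snd w2 = snd w1 mod 6 + 1 \<or> snd w1 = snd w2 mod 6 + 1))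
     \<or> (fst w1 \<and> \<not> fst w2 \<and> snd w1 = 6 \<and> snd w2 = 1) \<or> (\<not> fst w1 \<and> fst w2 \<and> snd w1 = 1 \<and> snd w2 = 6)"

definition RED :: "bool \<times> nat \<Rightarrow> bool \<times> nat \<Rightarrow> bool" where
  "RED w1 w2 \<longleftrightarrow> (fst w1 \<and> \<not> fst w2 \<and> (snd w2 = snd w1 \<or> snd w2 = snd w1 + 1))
     \<or> (\<not> fst w1 \<and> fst w2 \<and> (snd w1 = snd w2 \<or> snd w1 = snd w2 + 1))"

lemma fb_vx: "fence_black a b = {{vx a b (True,i), vx a b (True, i mod 6 + 1)} | i. i \<in> {1..6}}
   \<union> {{vx a b (False,i), vx a b (False, i mod 6 + 1)} | i. i \<in> {1..6}} \<union> {{vx a b (False,1), vx a b (True,6)}}"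
  by (simp add: fence_black_def vx_def)

lemma fr_vx: "fence_red a b = {{vx a b (True,i), vx a b (False, i)} | i. i \<in> {1..6}}
   \<union> {{vx a b (True,i), vx a b (False, i + 1)} | i. i \<in> {1..5}}"
  by (simp add: fence_red_def vx_def)

lemma mem_img_iff: "X \<in> {f i | i. i \<in> S} \<longleftrightarrow> (\<exists>i\<in>S. X = f i)" by blast

lemma BLK_iff:
  assumes "contains_fence G a b" "snd w1 \<in> {1..6}" "snd w2 \<in> {1..6}"
  shows "{vx a b w1, vx a b w2} \<in> fence_black a b \<longleftrightarrow> BLK w1 w2"
proof -
  have r: "\<And>c d. snd c \<in> {1..6} \<Longrightarrow> snd d \<in> {1..6} \<Longrightarrow>
     {vx a b w1, vx a b w2} = {vx a b c, vx a b d} \<longleftrightarrow> (w1 = c \<and> w2 = d) \<or> (w1 = d \<and> w2 = c)"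
    using vx_doubleton[OF assms(1) assms(2,3)] by blast
  have m: "i mod 6 + 1 \<in> {1..6}" for i :: nat by auto
  have "{vx a b w1, vx a b w2} \<in> fence_black a b \<longleftrightarrow>
     ((\<exists>i\<in>{1..6}. (w1 = (True,i) \<and> w2 = (True, i mod 6 + 1)) \<or> (w1 = (True, i mod 6 + 1) \<and> w2 = (True,i))) \<or>
     (\<exists>i\<in>{1..6}. (w1 = (False,i) \<and> w2 = (False, i mod 6 + 1)) \<or> (w1 = (False, i mod 6 + 1) \<and> w2 = (False,i)))) \<or>
     ((w1 = (False,1) \<and> w2 = (True,6)) \<or> (w1 = (True,6) \<and> w2 = (False,1)))"
    unfolding fb_vx Un_iff mem_img_iff singleton_iff
    apply (intro arg_cong2[where f="(\<or>)"] bex_cong refl)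
      apply (rule r; simp)
     apply (rule r; simp)
    apply (rule r; simp)
    done
  also have "\<dots> \<longleftrightarrow> BLK w1 w2"
  proof -
    obtain s p t q where w: "w1 = (s,p)" "w2 = (t,q)" by (cases w1, cases w2) auto
    have p: "p \<in> {1..6}" and q: "q \<in> {1..6}" using assms w by auto
    show ?thesis unfolding w BLK_def using p q by auto
  qed
  finally show ?thesis .
qed

lemma RED_iff:
  assumes "contains_fence G a b" "snd w1 \<in> {1..6}" "snd w2 \<in> {1..6}"
  shows "{vx a b w1, vx a b w2} \<in> fence_red a b \<longleftrightarrow> RED w1 w2"
proof -
  have r: "\<And>c d. snd c \<in> {1..6} \<Longrightarrow> snd d \<in> {1..6} \<Longrightarrow>
     {vx a b w1, vx a b w2} = {vx a b c, vx a b d} \<longleftrightarrow> (w1 = c \<and> w2 = d) \<or> (w1 = d \<and> w2 = c)"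
    using vx_doubleton[OF assms(1) assms(2,3)] by blast
  have "{vx a b w1, vx a b w2} \<in> fence_red a b \<longleftrightarrow>
     (\<exists>i\<in>{1..6}. (w1 = (True,i) \<and> w2 = (False, i)) \<or> (w1 = (False, i) \<and> w2 = (True,i))) \<or>
     (\<exists>i\<in>{1..5}. (w1 = (True,i) \<and> w2 = (False, i + 1)) \<or> (w1 = (False, i + 1) \<and> w2 = (True,i)))"
    unfolding fr_vx Un_iff mem_img_iff
    apply (intro arg_cong2[where f="(\<or>)"] bex_cong refl)
     apply (rule r; simp)
    apply (rule r; simp)
    done
  also have "\<dots> \<longleftrightarrow> RED w1 w2"
  proof -
    obtain s p t q where w: "w1 = (s,p)" "w2 = (t,q)" by (cases w1, cases w2) auto
    have p: "p \<in> {1..6}" and q: "q \<in> {1..6}" using assms w by auto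
    show ?thesis unfolding w RED_def using p q by auto
  qed
  finally show ?thesis .
qed


definition GOOD :: "nat \<Rightarrow> nat \<Rightarrow> bool \<times> nat \<Rightarrow> bool" where
  "GOOD i j w \<longleftrightarrow> (BLK (True,i) w \<or> RED (True,i) w \<or> BLK (False,j) w \<or> RED (False,j) w)
     \<and> (\<not> BLK (True,i) w \<or> \<not> BLK (False,j) w)"

definition W1 :: "nat \<Rightarrow> nat \<Rightarrow> bool \<times> nat" where
  "W1 i j = (if j = 1 then (False,6) else (True, (i+4) mod 6 + 1))"
definition W2 :: "nat \<Rightarrow> nat \<Rightarrow> bool \<times> nat" where
  "W2 i j = (if j = 1 then (False,2) else (True, i mod 6 + 1))"
definition W3 :: "nat \<Rightarrow> nat \<Rightarrow> bool \<times> nat" where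
  "W3 i j = (if j = 1 then (True, if i = 5 then 4 else i mod 6 + 1) else (False, if i = 6 \<and> j = 6 then 5 else j mod 6 + 1))"

definition OKW :: "nat \<Rightarrow> nat \<Rightarrow> bool \<times> nat \<Rightarrow> bool" where
  "OKW i j w \<longleftrightarrow> snd w \<in> {1..6} \<and> w \<noteq> (True,i) \<and> w \<noteq> (False,j) \<and> GOOD i j w"

lemma wit:
  assumes "i \<in> {1..6}" "j \<in> {1..6}"
  shows "W1 i j \<noteq> W2 i j \<and> W1 i j \<noteq> W3 i j \<and> W2 i j \<noteq> W3 i j \<and> OKW i j (W1 i j) \<and> OKW i j (W2 i j) \<and> OKW i j (W3 i j)"
proof -
  have "i = 1 \<or> i = 2 \<or> i = 3 \<or> i = 4 \<or> i = 5 \<or> i = 6" using assms(1) by auto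
  moreover have "j = 1 \<or> j = 2 \<or> j = 3 \<or> j = 4 \<or> j = 5 \<or> j = 6" using assms(2) by auto
  ultimately show ?thesis
    by (elim disjE; simp add: W1_def W2_def W3_def OKW_def GOOD_def BLK_def RED_def)
qed


lemma G_edge:
  assumes cf: "contains_fence G a b" and "snd w1 \<in> {1..6}" "snd w2 \<in> {1..6}" "w1 \<noteq> w2"
  shows "{vx a b w1, vx a b w2} \<in> tblack G \<longleftrightarrow> BLK w1 w2"
    and "{vx a b w1, vx a b w2} \<in> tred G \<longleftrightarrow> RED w1 w2"
proof -
  have F: "vx a b w \<in> fence_verts a b" if "snd w \<in> {1..6}" for w
    using that by (auto simp: vx_def fence_verts_def)
  have ne: "vx a b w1 \<noteq> vx a b w2" using vx_eq[OF cf assms(2,3)] assms(4) by simp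
  have all: "\<forall>x \<in> fence_verts a b. \<forall>y \<in> fence_verts a b. x \<noteq> y \<longrightarrow>
        ({x, y} \<in> tblack G \<longleftrightarrow> {x, y} \<in> fence_black a b) \<and>
        ({x, y} \<in> tred G \<longleftrightarrow> {x, y} \<in> fence_red a b)"
    using cf unfolding contains_fence_def by simp
  have "({vx a b w1, vx a b w2} \<in> tblack G \<longleftrightarrow> {vx a b w1, vx a b w2} \<in> fence_black a b) \<and>
        ({vx a b w1, vx a b w2} \<in> tred G \<longleftrightarrow> {vx a b w1, vx a b w2} \<in> fence_red a b)"
    using all F[OF assms(2)] F[OF assms(3)] ne by blast
  then show "{vx a b w1, vx a b w2} \<in> tblack G \<longleftrightarrow> BLK w1 w2"
    and "{vx a b w1, vx a b w2} \<in> tred G \<longleftrightarrow> RED w1 w2"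
    using BLK_iff[OF cf assms(2,3)] RED_iff[OF cf assms(2,3)] by simp_all
qed

lemma one_wit:
  assumes cf: "contains_fence G a b" and I: "INV G T" and K: "KP (fence_verts a b) T"
    and uv: "u \<in> tverts T" "v \<in> tverts T"
    and ip: "involves_pair u v (a i) (b j)" and ij: "i \<in> {1..6}" "j \<in> {1..6}"
    and w: "OKW i j w"
  shows "\<exists>z\<in>tverts T. vx a b w \<in> z \<and> z \<in> tverts (contract T u v) \<and> {u \<union> v, z} \<in> tred (contract T u v)
           \<and> z \<inter> fence_verts a b \<noteq> {}"
proof -
  let ?x = "vx a b w" and ?F = "fence_verts a b"
  have ws: "snd w \<in> {1..6}" "w \<noteq> (True,i)" "w \<noteq> (False,j)" "GOOD i j w" using w unfolding OKW_def by blast+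
  have sub: "?F \<subseteq> tverts G" using cf unfolding contains_fence_def by simp
  have Fv: "vx a b w' \<in> ?F" if "snd w' \<in> {1..6}" for w'
    using that by (auto simp: vx_def fence_verts_def)
  have ai: "a i = vx a b (True,i)" and bj: "b j = vx a b (False,j)" by (simp_all add: vx_def)
  have aF: "a i \<in> ?F" and bF: "b j \<in> ?F" using Fv[of "(True,i)"] Fv[of "(False,j)"] ij ai bj by simp_all
  have xF: "?x \<in> ?F" using Fv ws(1) by blast
  have xa: "?x \<noteq> a i" using vx_eq[OF cf ws(1), of "(True,i)"] ij ws(2) ai by simp
  have xb: "?x \<noteq> b j" using vx_eq[OF cf ws(1), of "(False,j)"] ij ws(3) bj by simp
  have "INV3 G T" using I by (simp add: INV_def)
  then obtain z where z: "z \<in> tverts T" "?x \<in> z" using sub xF unfolding INV3_def by blast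
  have Kz: "\<And>y. y \<in> ?F \<Longrightarrow> y \<in> z \<Longrightarrow> y = ?x" using K z xF unfolding KP_def by blast
  have zu: "z \<noteq> u"
  proof
    assume "z = u"
    then have "a i \<in> z \<or> b j \<in> z" using ip unfolding involves_pair_def by blast
    then show False using Kz aF bF xa xb by metis
  qed
  have zv: "z \<noteq> v"
  proof
    assume "z = v"
    then have "a i \<in> z \<or> b j \<in> z" using ip unfolding involves_pair_def by blast
    then show False using Kz aF bF xa xb by metis
  qed
  have ea: "{a i, ?x} \<in> tblack G \<longleftrightarrow> BLK (True,i) w" "{a i, ?x} \<in> tred G \<longleftrightarrow> RED (True,i) w"
    using G_edge[OF cf _ ws(1), of "(True,i)"] ij ws(2) ai by auto
  have eb: "{b j, ?x} \<in> tblack G \<longleftrightarrow> BLK (False,j) w" "{b j, ?x} \<in> tred G \<longleftrightarrow> RED (False,j) w"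
    using G_edge[OF cf _ ws(1), of "(False,j)"] ij ws(3) bj by auto
  have e: "{a i,?x} \<in> tblack G \<union> tred G \<or> {b j,?x} \<in> tblack G \<union> tred G"
    using ws(4) ea eb unfolding GOOD_def by blast
  have nb: "{a i,?x} \<notin> tblack G \<or> {b j,?x} \<notin> tblack G"
    using ws(4) ea eb unfolding GOOD_def by blast
  have cd: "a i \<in> u \<union> v" "b j \<in> u \<union> v" using ip unfolding involves_pair_def by blast+
  have red: "{u \<union> v, z} \<in> tred (contract T u v)"
    by (rule red_created[OF I uv z(1) zu zv cd z(2) e nb])
  have "z \<in> tverts (contract T u v)" using z(1) zu zv unfolding contract_simps by blast
  moreover have "z \<inter> ?F \<noteq> {}" using z(2) xF by blast
  ultimately show ?thesis using z red by blast
qed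

theorem lemma4p6:
  fixes G :: "'v trigraph" and a b :: "nat \<Rightarrow> 'v" and S :: "'v set"
    and ps :: "('v set \<times> 'v set) list" and k i j :: nat
  assumes "is_trigraph G"
    and "contains_fence G a b"
    and "fence_attached G a b S"
    and "partial_contraction_seq G ps"
    and "k < length ps"
    and "\<forall>k' < k. \<not> involves_two (fst (ps ! k')) (snd (ps ! k')) (fence_verts a b)"
    and "i \<in> {1..6}" and "j \<in> {1..6}"
    and "involves_pair (fst (ps ! k)) (snd (ps ! k)) (a i) (b j)"
  shows "card {z \<in> tverts (apply_seq (lift G) (take (Suc k) ps)).
                {fst (ps ! k) \<union> snd (ps ! k), z} \<in> tred (apply_seq (lift G) (take (Suc k) ps))
                \<and> z \<inter> fence_verts a b \<noteq> {}} \<ge> 3"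
proof -
  let ?T = "apply_seq (lift G) (take k ps)" and ?u = "fst (ps ! k)" and ?v = "snd (ps ! k)"
  let ?F = "fence_verts a b"
  have cf: "contains_fence G a b" by fact
  have finG: "finite (tverts G)" using assms(1) unfolding is_trigraph_def by simp
  have I: "INV G ?T" using INV_seq[OF finG assms(4)] assms(5) by simp
  have K: "KP ?F ?T" using KP_seq[OF assms(6) assms(5)] by simp
  have uv: "?u \<in> tverts ?T" "?v \<in> tverts ?T"
    using assms(4,5) unfolding partial_contraction_seq_def Let_def by blast+
  have T': "apply_seq (lift G) (take (Suc k) ps) = contract ?T ?u ?v" by (rule apply_seq_Suc[OF assms(5)])
  define Q where "Q = {z \<in> tverts (contract ?T ?u ?v). {?u \<union> ?v, z} \<in> tred (contract ?T ?u ?v) \<and> z \<inter> ?F \<noteq> {}}"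
  have W: "W1 i j \<noteq> W2 i j" "W1 i j \<noteq> W3 i j" "W2 i j \<noteq> W3 i j"
     "OKW i j (W1 i j)" "OKW i j (W2 i j)" "OKW i j (W3 i j)" using wit[OF assms(7,8)] by blast+
  have ex: "\<exists>z\<in>tverts ?T. vx a b w \<in> z \<and> z \<in> Q" if "OKW i j w" for w
    using one_wit[OF cf I K uv assms(9) assms(7,8) that] unfolding Q_def by blast
  obtain z1 where z1: "vx a b (W1 i j) \<in> z1" "z1 \<in> Q" "z1 \<in> tverts ?T" using ex[OF W(4)] by blast
  obtain z2 where z2: "vx a b (W2 i j) \<in> z2" "z2 \<in> Q" "z2 \<in> tverts ?T" using ex[OF W(5)] by blast
  obtain z3 where z3: "vx a b (W3 i j) \<in> z3" "z3 \<in> Q" "z3 \<in> tverts ?T" using ex[OF W(6)] by blast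
  have sn: "snd (W1 i j) \<in> {1..6}" "snd (W2 i j) \<in> {1..6}" "snd (W3 i j) \<in> {1..6}"
    using W(4-6) unfolding OKW_def by blast+
  have Fv: "vx a b w' \<in> ?F" if "snd w' \<in> {1..6}" for w'
    using that by (auto simp: vx_def fence_verts_def)
  have dz: "z \<noteq> z'" if "z \<in> tverts ?T" "z' \<in> tverts ?T" "vx a b w \<in> z" "vx a b w' \<in> z'"
     "snd w \<in> {1..6}" "snd w' \<in> {1..6}" "w \<noteq> w'" for z z' w w'
  proof
    assume "z = z'"
    then have "vx a b w = vx a b w'" using K that Fv[OF that(5)] Fv[OF that(6)] unfolding KP_def by blast
    then show False using vx_eq[OF cf that(5,6)] that(7) by simp
  qed
  have d: "z1 \<noteq> z2" "z1 \<noteq> z3" "z2 \<noteq> z3"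
    using dz[OF z1(3) z2(3) z1(1) z2(1) sn(1,2) W(1)] dz[OF z1(3) z3(3) z1(1) z3(1) sn(1,3) W(2)]
      dz[OF z2(3) z3(3) z2(1) z3(1) sn(2,3) W(3)] by blast+
  have finQ: "finite Q"
  proof -
    have "INV G (contract ?T ?u ?v)" by (rule INV_contract[OF I uv])
    then have "finite (tverts (contract ?T ?u ?v))" by (simp add: INV_def)
    then show ?thesis unfolding Q_def by simp
  qed
  have "card {z1,z2,z3} = 3" using d by simp
  moreover have "card {z1,z2,z3} \<le> card Q" using finQ z1(2) z2(2) z3(2) by (intro card_mono) auto
  ultimately have "3 \<le> card Q" by simp
  then show ?thesis unfolding T' Q_def .
qed

end
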